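(* For every $z\in\mathbb{R}$ there exists a topology $\tau_z\in\mathcal{L}$ with $C(\tau_z)=(-\infty,z]$ such that all spaces $(\mathbb{R},\tau_z)$, $z\in\mathbb{R}$, are completely metrizable and pairwise homeomorphic.
   Context: $\eta$ denotes the Euclidean topology on $\mathbb{R}$. $\mathcal{L}$ denotes the family of all Hausdorff topologies $\tau$ on $\mathbb{R}$ with $\tau\subset\eta$. For $\tau\in\mathcal{L}$ and $a\in\mathbb{R}$ let $\mathcal{N}_\tau(a)$ be the neighborhood filter of $a$ in $(\mathbb{R},\tau)$; $C(\tau)$ is the set of all $a\in\mathbb{R}$ with $\mathcal{N}_\tau(a)\neq\mathcal{N}_\eta(a)$. *)

theory Defs
  imports "HOL-Analysis.Analysis"
begin

definition coarser_Hausdorff :: "real topology \<Rightarrow> bool" where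
  "coarser_Hausdorff \<tau> \<longleftrightarrow>
     topspace \<tau> = UNIV \<and> Hausdorff_space \<tau> \<and> (\<forall>S. openin \<tau> S \<longrightarrow> open S)"

definition C_set :: "real topology \<Rightarrow> real set" where
  "C_set \<tau> = {a. nhdsin \<tau> a \<noteq> nhdsin euclidean a}"

end

theory Submission
  imports Defs
begin
definition xf :: "real \<Rightarrow> real" where
  "xf t = t * (1 - max 0 t) * (1 + cos (pi * max 0 t)) / 2"
definition yf :: "real \<Rightarrow> real" where
  "yf t = max 0 t / (1 + (max 0 t)^2)"
definition FF :: "real \<Rightarrow> real \<times> real" where
  "FF t = (xf t, yf t)"

lemma cont_FF: "continuous_on UNIV FF"
proof -
  have "continuous_on UNIV xf" unfolding xf_def by (intro continuous_intros) auto
  moreover have "continuous_on UNIV yf" unfolding yf_def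
    by (intro continuous_intros) (auto, smt (verit) zero_le_power2)
  ultimately show ?thesis unfolding FF_def by (intro continuous_intros) auto
qed

lemma xf_neg: "t \<le> 0 \<Longrightarrow> xf t = t" by (simp add: xf_def)
lemma yf_neg: "t \<le> 0 \<Longrightarrow> yf t = 0" by (simp add: yf_def)
lemma yf_nonneg: "yf t \<ge> 0" by (simp add: yf_def)
lemma yf_pos: "t > 0 \<Longrightarrow> yf t > 0" by (simp add: yf_def add_pos_nonneg)
lemma yf_le: "t > 0 \<Longrightarrow> yf t \<le> 1 / t"
  by (simp add: yf_def field_simps add_pos_nonneg power2_eq_square)
lemma xf_big: "t \<ge> 1 \<Longrightarrow> xf t \<le> 0"
proof -
  assume t: "t \<ge> 1"
  have "t * (1 - t) \<le> 0" using t by (simp add: mult_nonneg_nonpos)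
  moreover have "1 + cos (pi * t) \<ge> 0" by (smt (verit) cos_ge_minus_one)
  ultimately have "t * (1 - t) * (1 + cos (pi * t)) \<le> 0" by (simp add: mult_nonpos_nonneg)
  thus ?thesis using t by (simp add: xf_def)
qed
lemma xf_small: "0 < t \<Longrightarrow> t < 1 \<Longrightarrow> xf t > 0"
proof -
  assume t: "0 < t" "t < 1"
  have "cos (pi * t) > -1"
  proof -
    have "cos (pi * t) \<noteq> -1"
    proof
      assume "cos (pi * t) = -1"
      then obtain n :: int where "pi * t = (2 * real_of_int n + 1) * pi" using cos_eq_minus1 by blast
      then have "t = 2 * real_of_int n + 1" by simp
      with t have "0 < 2 * real_of_int n + 1" "2 * real_of_int n + 1 < 1" by auto
      then have "0 < 2*n+1" "2*n+1 < 1" by linarith+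
      then show False by simp
    qed
    thus ?thesis by (smt (verit) cos_ge_minus_one)
  qed
  thus ?thesis using t by (simp add: xf_def)
qed
lemma yf_eq: "0 < s \<Longrightarrow> 0 < t \<Longrightarrow> yf s = yf t \<Longrightarrow> s = t \<or> s * t = 1"
proof -
  assume st: "0 < s" "0 < t" "yf s = yf t"
  then have "s / (1 + s^2) = t / (1 + t^2)" by (simp add: yf_def)
  moreover have "1 + s^2 \<noteq> 0" "1 + t^2 \<noteq> 0" by (smt (verit) zero_le_power2)+
  ultimately have "s * (1 + t^2) = t * (1 + s^2)"
    by (simp add: frac_eq_eq)
  then have "(s - t) * (1 - s * t) = 0" by (simp add: algebra_simps power2_eq_square)
  thus ?thesis by auto
qed
lemma inj_FF: "inj FF"
proof (rule injI)
  fix s t assume "FF s = FF t"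
  then have x: "xf s = xf t" and y: "yf s = yf t" by (auto simp: FF_def)
  show "s = t"
  proof (cases "s \<le> 0")
    case True
    then have "yf t = 0" using y yf_neg[OF True] by simp
    then have "\<not> t > 0" using yf_pos[of t] by linarith
    then have "t \<le> 0" by linarith
    then show ?thesis using x xf_neg[OF True] xf_neg[of t] by simp
  next
    case False
    then have spos: "s > 0" by simp
    have "yf s > 0" using yf_pos[OF spos] .
    then have "\<not> t \<le> 0" using y yf_neg[of t] by auto
    then have tpos: "t > 0" by simp
    have "s = t \<or> s * t = 1" using yf_eq[OF spos tpos y] .
    moreover have "s * t \<noteq> 1 \<or> s = t"
    proof (rule ccontr)
      assume h: "\<not> (s * t \<noteq> 1 \<or> s = t)"
      then have st: "s * t = 1" "s \<noteq> t" by auto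
      have tq: "t = 1 / s" using st spos by (simp add: field_simps)
      have "s \<noteq> 1" using st tq by auto
      then have "s < 1 \<or> s > 1" by linarith
      then show False
      proof
        assume s1: "s < 1"
        then have "t > 1" unfolding tq using spos by (simp add: less_divide_eq_1_pos)
        then have "xf t \<le> 0" using xf_big[of t] by simp
        moreover have "xf s > 0" using xf_small[OF spos s1] .
        ultimately show False using x by simp
      next
        assume s1: "s > 1"
        then have t1: "t < 1" unfolding tq using spos by (simp add: divide_less_eq_1_pos)
        have "xf s \<le> 0" using xf_big[of s] s1 by simp
        moreover have "xf t > 0" using xf_small[OF tpos t1] .
        ultimately show False using x by simp
      qed
    qed
    ultimately show ?thesis by auto
  qed
qed

lemma FF_approach:
  assumes a: "a \<le> 0" and e: "e > 0"
  shows "\<exists>t>M. dist (FF t) (FF a) < e"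
proof -
  obtain n :: nat where n: "real n \<ge> max (\<bar>M\<bar>+1) (max (1/e+1) (\<bar>a\<bar>+1))"
    using real_arch_simple by blast
  then have n1: "real n \<ge> \<bar>M\<bar>+1" "real n \<ge> 1/e+1" "real n \<ge> \<bar>a\<bar>+1"
    by simp_all
  define T where "T = 2 * real n"
  have T1: "T \<ge> 1" using n1(3) unfolding T_def by linarith
  have TM: "T > M" using n1(1) unfolding T_def by linarith
  have Te: "T > 1/e" using n1(2) e unfolding T_def by (smt (verit) divide_pos_pos)
  have Ta: "T \<ge> \<bar>a\<bar> + 1" using n1(3) unfolding T_def by linarith
  have "pi * T = 2 * real n * pi" by (simp add: T_def)
  then have c1: "cos (pi * T) = 1" by (metis cos_2npi)
  have "pi * (T + 1) = pi * T + pi" by (simp add: algebra_simps)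
  then have c2: "cos (pi * (T + 1)) = -1" using c1 by (simp add: cos_periodic_pi)
  have "xf T = T * (1 - T)" using T1 c1 by (simp add: xf_def)
  also have "\<dots> \<le> 1 * (1 - T)" using T1 by (intro mult_right_mono_neg) auto
  also have "\<dots> \<le> a" using Ta abs_ge_minus_self[of a] by simp
  finally have xT: "xf T \<le> a" .
  have xT1: "xf (T + 1) = 0" using T1 c2 by (simp add: xf_def)
  have cont: "continuous_on {T..T+1} xf" unfolding xf_def by (intro continuous_intros) auto
  have aT1: "a \<le> xf (T + 1)" using xT1 a by simp
  obtain t where t: "T \<le> t" "t \<le> T + 1" "xf t = a"
    using IVT'[OF xT aT1 _ cont] by auto
  have tpos: "t > 0" using t T1 by simp
  have Fa: "FF a = (a, 0)" by (simp add: FF_def xf_neg[OF a] yf_neg[OF a])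
  have Ft: "FF t = (a, yf t)" by (simp add: FF_def t(3))
  have "dist (FF t) (FF a) = yf t"
    unfolding Fa Ft by (simp add: dist_Pair_Pair dist_real_def yf_nonneg)
  also have "\<dots> \<le> 1 / t" using yf_le tpos by simp
  also have "\<dots> < e"
  proof -
    have "1/e < t" using Te t by simp
    then show ?thesis using e tpos by (simp add: field_simps)
  qed
  finally show ?thesis using t TM by (intro exI[of _ t]) auto
qed

lemma FF_bound:
  assumes "\<not> (snd l = 0 \<and> fst l \<le> 0)"
  shows "\<exists>r>0. \<exists>B N. \<forall>t. dist (FF t) l < r \<longrightarrow> B \<le> t \<and> t \<le> N"
proof -
  obtain l1 l2 where l: "l = (l1, l2)" by fastforce
  have dx: "\<bar>xf t - l1\<bar> \<le> dist (FF t) l" for t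
    using dist_fst_le[of "FF t" l] by (simp add: FF_def dist_real_def l)
  have dy: "\<bar>yf t - l2\<bar> \<le> dist (FF t) l" for t
    using dist_snd_le[of "FF t" l] by (simp add: FF_def dist_real_def l)
  have low: "dist (FF t) l < r \<Longrightarrow> r \<le> 1 \<Longrightarrow> - \<bar>l1\<bar> - 1 \<le> t" for t r
  proof (rule ccontr)
    assume "dist (FF t) l < r" "r \<le> 1" "\<not> - \<bar>l1\<bar> - 1 \<le> t"
    then have "t \<le> 0" "\<bar>t - l1\<bar> < 1" using dx[of t] xf_neg[of t] by auto
    with \<open>\<not> - \<bar>l1\<bar> - 1 \<le> t\<close> show False by linarith
  qed
  show ?thesis
  proof (cases "l1 > 0")
    case True
    have r: "0 < min 1 l1" using True by simp
    have "\<forall>t. dist (FF t) l < min 1 l1 \<longrightarrow> - \<bar>l1\<bar> - 1 \<le> t \<and> t \<le> 1"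
    proof (intro allI impI conjI)
      fix t assume d: "dist (FF t) l < min 1 l1"
      show "- \<bar>l1\<bar> - 1 \<le> t" using low[OF d] by simp
      show "t \<le> 1"
      proof (rule ccontr)
        assume "\<not> t \<le> 1"
        then have "xf t \<le> 0" using xf_big by simp
        then have "\<bar>xf t - l1\<bar> \<ge> l1" using True by simp
        then show False using dx[of t] d by simp
      qed
    qed
    then show ?thesis using r by blast
  next
    case False
    then have l2: "l2 \<noteq> 0" using assms l by auto
    have r: "0 < min 1 (\<bar>l2\<bar>/2)" using l2 by simp
    have "\<forall>t. dist (FF t) l < min 1 (\<bar>l2\<bar>/2) \<longrightarrow> - \<bar>l1\<bar> - 1 \<le> t \<and> t \<le> 2 / \<bar>l2\<bar> + 1"
    proof (intro allI impI conjI)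
      fix t assume d: "dist (FF t) l < min 1 (\<bar>l2\<bar>/2)"
      show "- \<bar>l1\<bar> - 1 \<le> t" using low[OF d] by simp
      show "t \<le> 2 / \<bar>l2\<bar> + 1"
      proof (rule ccontr)
        assume "\<not> t \<le> 2 / \<bar>l2\<bar> + 1"
        then have t: "t > 2 / \<bar>l2\<bar>" "t > 0" using l2 by (auto, smt (verit) divide_pos_pos zero_less_abs_iff)
        then have "2 < t * \<bar>l2\<bar>" using l2 by (simp add: divide_less_eq)
        then have "1 / t < \<bar>l2\<bar> / 2" using t by (simp add: field_simps)
        then have "yf t < \<bar>l2\<bar> / 2" using yf_le[OF t(2)] by simp
        then have "\<bar>yf t - l2\<bar> > \<bar>l2\<bar> / 2" using yf_nonneg[of t] by linarith
        then show False using dy[of t] d by simp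
      qed
    qed
    then show ?thesis using r by blast
  qed
qed

lemma closed_FF_img:
  assumes C: "closed C" and sub: "{..0} \<subseteq> C"
  shows "closed (FF ` C)"
  unfolding closed_sequential_limits
proof (intro allI impI, elim conjE)
  fix s l assume sC: "\<forall>n. s n \<in> FF ` C" and lim: "s \<longlonglongrightarrow> l"
  have "\<forall>n. \<exists>x. x \<in> C \<and> s n = FF x" using sC by blast
  from choice[OF this] obtain t where "\<forall>n. t n \<in> C \<and> s n = FF (t n)" by blast
  then have t: "\<And>n. t n \<in> C" "\<And>n. s n = FF (t n)" by auto
  show "l \<in> FF ` C"
  proof (cases "snd l = 0 \<and> fst l \<le> 0")
    case True
    then have "l = FF (fst l)" by (simp add: FF_def xf_neg yf_neg prod_eq_iff)
    moreover have "fst l \<in> C" using True sub by auto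
    ultimately show ?thesis by blast
  next
    case False
    from FF_bound[OF False] obtain r B N where r: "r > 0"
      and rb: "\<And>t. dist (FF t) l < r \<Longrightarrow> B \<le> t \<and> t \<le> N" by blast
    have ev: "eventually (\<lambda>n. dist (s n) l < r) sequentially"
      using lim r by (simp add: tendsto_iff)
    have "eventually (\<lambda>n. s n \<in> FF ` (C \<inter> {B..N})) sequentially"
      using ev by eventually_elim (use t rb in auto)
    moreover have "compact (FF ` (C \<inter> {B..N}))"
      by (intro compact_continuous_image continuous_on_subset[OF cont_FF] closed_Int_compact C) auto
    ultimately have "l \<in> FF ` (C \<inter> {B..N})"
      using Lim_in_closed_set[OF compact_imp_closed _ _ lim] by auto
    then show ?thesis by blast
  qed
qed

lemma pullback_homeo:
  fixes G :: "real \<Rightarrow> real \<times> real"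
  assumes inj: "inj G" and cont: "continuous_on UNIV G"
  shows "pullback_topology UNIV G euclidean homeomorphic_space top_of_set (range G)"
  unfolding homeomorphic_space_def homeomorphic_maps_def
proof (intro exI conjI)
  have cG: "continuous_map euclidean euclidean G" using cont by simp
  show "continuous_map (pullback_topology UNIV G euclidean) (top_of_set (range G)) G"
    apply (rule continuous_map_into_subtopology)
    using continuous_map_pullback[of euclidean euclidean id UNIV G] apply simp
    by auto
  have "continuous_map (top_of_set (range G)) euclidean (G \<circ> inv G)"
    apply (rule continuous_map_eq[of _ _ id])
     apply (simp add: continuous_map_from_subtopology)
    by (auto simp: f_inv_into_f)
  then show "continuous_map (top_of_set (range G)) (pullback_topology UNIV G euclidean) (inv G)"
    by (intro continuous_map_pullback') auto
  show "\<forall>x\<in>topspace (pullback_topology UNIV G euclidean). inv G (G x) = x"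
    using inj by simp
  show "\<forall>y\<in>topspace (top_of_set (range G)). G (inv G y) = y"
    by (auto simp: f_inv_into_f)
qed

definition TT :: "real \<Rightarrow> real topology" where
  "TT z = pullback_topology UNIV (\<lambda>t. FF (t - z)) euclidean"

lemma openin_TT: "openin (TT z) S \<longleftrightarrow> (\<exists>U. open U \<and> S = (\<lambda>t. FF (t - z)) -` U)"
  by (simp add: TT_def openin_pullback_topology)

lemma topspace_TT: "topspace (TT z) = UNIV"
  by (simp add: TT_def topspace_pullback_topology)

lemma inj_G: "inj (\<lambda>t. FF (t - z))"
proof (rule injI)
  fix x y assume "FF (x - z) = FF (y - z)"
  then have "x - z = y - z" by (rule injD[OF inj_FF])
  then show "x = y" by simp
qed

lemma cont_G: "continuous_on UNIV (\<lambda>t. FF (t - z))"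
  by (intro continuous_on_compose2[OF cont_FF]) (auto intro: continuous_intros)

lemma range_G: "range (\<lambda>t. FF (t - z)) = range FF"
proof
  show "range FF \<subseteq> range (\<lambda>t. FF (t - z))"
  proof
    fix p assume "p \<in> range FF"
    then obtain u where "p = FF u" by blast
    then have "p = FF ((u + z) - z)" by simp
    then show "p \<in> range (\<lambda>t. FF (t - z))" by blast
  qed
qed auto

lemma closed_G_img:
  assumes C: "closed C" and sub: "{..z} \<subseteq> C"
  shows "closed ((\<lambda>t. FF (t - z)) ` C)"
proof -
  have eq: "(\<lambda>t. FF (t - z)) ` C = FF ` ((+) (-z) ` C)" by (simp add: image_image)
  have "{..0} \<subseteq> (+) (-z) ` C"
  proof
    fix u :: real assume "u \<in> {..0}"
    then have "u + z \<in> C" using sub by auto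
    then show "u \<in> (+) (-z) ` C" by (intro image_eqI[where x="u+z"]) auto
  qed
  then show ?thesis unfolding eq by (intro closed_FF_img closed_translation C)
qed

lemma homeo_TT: "TT z homeomorphic_space top_of_set (range FF)"
  using pullback_homeo[OF inj_G cont_G, of z] unfolding TT_def range_G .

lemma TT_props: "coarser_Hausdorff (TT z) \<and> completely_metrizable_space (TT z)"
proof -
  have cl: "closed (range FF)" by (rule closed_FF_img) auto
  have H: "Hausdorff_space (top_of_set (range FF))"
    by (rule Hausdorff_space_subtopology[OF Hausdorff_space_euclidean])
  have "Hausdorff_space (TT z)"
    using homeomorphic_Hausdorff_space[OF homeo_TT[of z]] H by (rule iffD2)
  moreover have "completely_metrizable_space (top_of_set (range FF))"
    by (rule completely_metrizable_space_closedin[OF completely_metrizable_space_euclidean cl[unfolded closed_closedin]])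
  then have "completely_metrizable_space (TT z)"
    using homeomorphic_completely_metrizable_space[OF homeo_TT[of z]] by blast
  moreover have "open S" if "openin (TT z) S" for S
  proof -
    from that[unfolded openin_TT] obtain U where U: "open U" "S = (\<lambda>t. FF (t - z)) -` U" by blast
    show "open S" unfolding U(2) by (rule open_vimage[OF U(1) cont_G])
  qed
  ultimately show ?thesis unfolding coarser_Hausdorff_def topspace_TT by blast
qed

lemma C_TT: "C_set (TT z) = {..z}"
  unfolding C_set_def
proof (intro set_eqI iffI)
  fix a assume "a \<in> {..z}"
  then have az: "a - z \<le> 0" by simp
  show "a \<in> {a. nhdsin (TT z) a \<noteq> nhdsin euclidean a}"
  proof (rule CollectI, rule notI)
    assume eq: "nhdsin (TT z) a = nhdsin euclidean a"
    have "eventually (\<lambda>t. t \<in> ball a 1) (nhdsin euclidean a)"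
      unfolding eventually_nhdsin by (intro disjI2 exI[of _ "ball a 1"]) auto
    then have "eventually (\<lambda>t. t \<in> ball a 1) (nhdsin (TT z) a)" using eq by simp
    then obtain S where S: "openin (TT z) S" "a \<in> S" "\<And>x. x \<in> S \<Longrightarrow> x \<in> ball a 1"
      unfolding eventually_nhdsin topspace_TT by auto
    then obtain U where U: "open U" "S = (\<lambda>t. FF (t - z)) -` U" by (auto simp: openin_TT)
    then have "FF (a - z) \<in> U" using S by auto
    then obtain e where e: "e > 0" "ball (FF (a - z)) e \<subseteq> U" using openE[OF U(1)] by blast
    obtain t' where t': "t' > a + 1 - z" "dist (FF t') (FF (a - z)) < e"
      using FF_approach[OF az e(1), of "a + 1 - z"] by blast
    then have "FF ((t' + z) - z) \<in> U" using e by (auto simp: dist_commute)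
    then have "t' + z \<in> S" using U by simp
    then have "t' + z \<in> ball a 1" using S by blast
    then show False using t' by (simp add: dist_real_def)
  qed
next
  fix a assume A: "a \<in> {a. nhdsin (TT z) a \<noteq> nhdsin euclidean a}"
  show "a \<in> {..z}"
  proof (rule ccontr)
    assume "a \<notin> {..z}"
    then have az: "a > z" by simp
    have "nhdsin (TT z) a = nhdsin euclidean a"
      unfolding filter_eq_iff
    proof (intro allI iffI)
      fix P assume "eventually P (nhdsin (TT z) a)"
      then obtain S where "openin (TT z) S" "a \<in> S" "\<forall>x\<in>S. P x"
        unfolding eventually_nhdsin topspace_TT by auto
      moreover have "open S" using TT_props[of z] \<open>openin (TT z) S\<close>
        by (auto simp: coarser_Hausdorff_def)
      ultimately show "eventually P (nhdsin euclidean a)"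
        unfolding eventually_nhdsin by auto
    next
      fix P assume "eventually P (nhdsin euclidean a)"
      then obtain S where S: "open S" "a \<in> S" "\<forall>x\<in>S. P x"
        unfolding eventually_nhdsin by auto
      then obtain e where e: "e > 0" "ball a e \<subseteq> S" using openE[OF S(1) S(2)] by blast
      define e' where "e' = min e ((a - z) / 2)"
      have "e' \<le> (a - z) / 2" unfolding e'_def by (rule min.cobounded2)
      then have e': "e' > 0" "e' \<le> e" "z < a - e'" using e az by (auto simp: e'_def)
      define C where "C = {..a - e'} \<union> {a + e'..}"
      have "closed C" by (simp add: C_def closed_Un)
      moreover have "{..z} \<subseteq> C" using e' by (auto simp: C_def)
      ultimately have cl: "closed ((\<lambda>t. FF (t - z)) ` C)" by (rule closed_G_img)
      define U where "U = - ((\<lambda>t. FF (t - z)) ` C)"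
      have "open U" using cl by (simp add: U_def open_Compl)
      have aC: "a \<notin> C" using e' by (simp add: C_def)
      have "FF (a - z) \<in> U"
      proof -
        have "FF (a - z) \<notin> (\<lambda>t. FF (t - z)) ` C"
        proof
          assume "FF (a - z) \<in> (\<lambda>t. FF (t - z)) ` C"
          then obtain c where c: "c \<in> C" "FF (a - z) = FF (c - z)" by blast
          then have "a = c" using injD[OF inj_G[of z]] by blast
          then show False using aC c by simp
        qed
        then show ?thesis by (simp add: U_def)
      qed
      have sub: "(\<lambda>t. FF (t - z)) -` U \<subseteq> S"
      proof
        fix t assume "t \<in> (\<lambda>t. FF (t - z)) -` U"
        then have "t \<notin> C" by (auto simp: U_def)
        then have "dist a t < e'" by (auto simp: C_def dist_real_def)
        then show "t \<in> S" using e e' by auto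
      qed
      show "eventually P (nhdsin (TT z) a)"
        unfolding eventually_nhdsin
        apply (rule disjI2)
        apply (rule exI[of _ "(\<lambda>t. FF (t - z)) -` U"])
        using \<open>open U\<close> \<open>FF (a - z) \<in> U\<close> sub S by (auto simp: openin_TT)
    qed
    then show False using A by simp
  qed
qed

theorem proposition5:
  shows "\<exists>T :: real \<Rightarrow> real topology.
           (\<forall>z. coarser_Hausdorff (T z) \<and> C_set (T z) = {..z} \<and>
                completely_metrizable_space (T z)) \<and>
           (\<forall>z w. T z homeomorphic_space T w)"
proof (intro exI[of _ TT] conjI allI)
  fix z show "coarser_Hausdorff (TT z)" "completely_metrizable_space (TT z)"
    using TT_props by auto
  show "C_set (TT z) = {..z}" by (rule C_TT)
next
  fix z w show "TT z homeomorphic_space TT w"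
    using homeomorphic_space_trans[OF homeo_TT[of z] homeomorphic_space_sym[THEN iffD1, OF homeo_TT[of w]]] .
qed
end
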